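(* Let $t\ge0$ and $b_0,\dots,b_t\ge0$ be integers and let $M=\{0^{(b_0)},1^{(b_1)},\dots,t^{(b_t)}\}$ be the multiset containing $b_i$ copies of $i$. Then the number of vn-arrangements of $M$ is \[\prod_{i=0}^{t-1}\binom{b_i+b_{i+1}}{b_i}.\]
   Context: Let $b=b_0+\cdots+b_t$. A vn-arrangement of the multiset $M$ is a sequence $(v_1,\dots,v_b)$ that lists the elements of $M$ with their multiplicities (i.e., an arrangement of $M$) such that $v_{i+1}-v_i\le1$ for all $1\le i<b$. An empty product equals $1$. *)

theory Defs
  imports Main "HOL-Library.Multiset"
begin

definition level_mset :: "nat \<Rightarrow> (nat \<Rightarrow> nat) \<Rightarrow> nat multiset" where
  "level_mset t b = (\<Sum>i\<in>{0..t}. replicate_mset (b i) i)"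

definition vn_arrangement :: "nat multiset \<Rightarrow> nat list \<Rightarrow> bool" where
  "vn_arrangement M vs \<longleftrightarrow> mset vs = M \<and>
     (\<forall>i. Suc i < length vs \<longrightarrow> int (vs ! Suc i) - int (vs ! i) \<le> 1)"

end

theory Submission
  imports Defs
begin

fun goodc :: "nat \<Rightarrow> bool \<Rightarrow> nat list \<Rightarrow> bool" where
  "goodc m a [] = True"
| "goodc m a (x # xs) = ((x = Suc m \<longrightarrow> a) \<and> goodc m (x = m \<or> x = Suc m) xs)"

definition RR :: "nat \<Rightarrow> nat \<Rightarrow> bool" where "RR x y \<longleftrightarrow> y \<le> Suc x"

lemma succ_m: "\<forall>z\<in>set zs. z \<le> Suc m \<Longrightarrow> successively RR (m # zs) = successively RR zs"
  by (cases zs) (auto simp: RR_def)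

lemma succ_filter_aux:
  "set (x#vs) \<subseteq> {..Suc m} \<Longrightarrow> successively RR (x # vs) \<longleftrightarrow>
     goodc m (x = m \<or> x = Suc m) vs \<and> successively RR (filter (\<lambda>z. z \<noteq> Suc m) (x # vs))"
proof (induction vs arbitrary: x)
  case Nil
  then show ?case by auto
next
  case (Cons y ys)
  have IH: "successively RR (y # ys) \<longleftrightarrow> goodc m (y = m \<or> y = Suc m) ys \<and>
      successively RR (filter (\<lambda>z. z \<noteq> Suc m) (y # ys))" using Cons by auto
  have le: "\<forall>z\<in>set (filter (\<lambda>z. z \<noteq> Suc m) ys). z \<le> Suc m" using Cons.prems by auto
  consider "x \<noteq> Suc m" "y \<noteq> Suc m" | "x \<noteq> Suc m" "y = Suc m" | "x = Suc m" "y \<noteq> Suc m"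
    | "x = Suc m" "y = Suc m" by blast
  then show ?case
  proof cases
    case 1 then show ?thesis using IH by auto
  next
    case 2
    have xm: "RR x y \<longleftrightarrow> x = m" using 2 Cons.prems by (auto simp: RR_def)
    show ?thesis using 2 IH xm succ_m[OF le] by auto
  next
    case 3
    have "RR x y" using 3 Cons.prems by (auto simp: RR_def)
    then show ?thesis using 3 IH by auto
  next
    case 4 then show ?thesis using IH by (auto simp: RR_def)
  qed
qed

lemma succ_filter:
  "set vs \<subseteq> {..Suc m} \<Longrightarrow> successively RR vs \<longleftrightarrow>
     goodc m True vs \<and> successively RR (filter (\<lambda>z. z \<noteq> Suc m) vs)"
  by (cases vs) (auto simp: succ_filter_aux)


definition FF :: "nat \<Rightarrow> bool \<Rightarrow> nat list \<Rightarrow> nat \<Rightarrow> nat list set" where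
  "FF m a w k = {vs. filter (\<lambda>z. z \<noteq> Suc m) vs = w \<and> count_list vs (Suc m) = k \<and> goodc m a vs}"

lemma FF_Nil: "FF m a [] k = (if a \<or> k = 0 then {replicate k (Suc m)} else {})"
proof -
  have A: "vs = replicate (length vs) (Suc m)" if "filter (\<lambda>z. z \<noteq> Suc m) vs = []" for vs
    using that by (induction vs) (auto split: if_splits)
  have B: "count_list (replicate n (Suc m)) (Suc m) = n" for n by (induction n) auto
  have C: "goodc m a (replicate n (Suc m)) \<longleftrightarrow> a \<or> n = 0" for n a
    by (induction n arbitrary: a) auto
  have D: "filter (\<lambda>z. z \<noteq> Suc m) (replicate n (Suc m)) = []" for n by (induction n) auto
  show ?thesis
  proof (rule set_eqI)
    fix vs
    show "vs \<in> FF m a [] k \<longleftrightarrow> vs \<in> (if a \<or> k = 0 then {replicate k (Suc m)} else {})"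
    proof
      assume "vs \<in> FF m a [] k"
      then have f: "filter (\<lambda>z. z \<noteq> Suc m) vs = []" "count_list vs (Suc m) = k" "goodc m a vs"
        by (auto simp: FF_def)
      have "vs = replicate (length vs) (Suc m)" using A[OF f(1)] .
      moreover then have "length vs = k" using f(2) B by metis
      ultimately have "vs = replicate k (Suc m)" by simp
      then show "vs \<in> (if a \<or> k = 0 then {replicate k (Suc m)} else {})" using f(3) C by simp
    next
      assume "vs \<in> (if a \<or> k = 0 then {replicate k (Suc m)} else {})"
      then show "vs \<in> FF m a [] k" by (auto simp: FF_def B C D split: if_splits)
    qed
  qed
qed

lemma FF_Cons: "x \<noteq> Suc m \<Longrightarrow> FF m a (x # w) k =
   (if a \<and> k \<ge> 1 then Cons (Suc m) ` FF m True (x # w) (k - 1) else {}) \<union> Cons x ` FF m (x = m) w k"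
proof -
  assume x: "x \<noteq> Suc m"
  show ?thesis
  proof (rule set_eqI)
    fix vs show "vs \<in> FF m a (x # w) k \<longleftrightarrow> vs \<in> (if a \<and> k \<ge> 1 then Cons (Suc m) ` FF m True (x # w) (k - 1) else {}) \<union> Cons x ` FF m (x = m) w k"
      using x by (cases vs) (auto simp: FF_def)
  qed
qed

lemma FF_card: "Suc m \<notin> set w \<Longrightarrow> finite (FF m a w k) \<and> card (FF m a w k) = (k + count_list w m + (if a then 1 else 0) - 1) choose k"
proof (induction w arbitrary: a k)
  case Nil
  then show ?case by (auto simp: FF_Nil)
next
  case (Cons x w)
  have x: "x \<noteq> Suc m" and w: "Suc m \<notin> set w" using Cons.prems by auto
  note IH = Cons.IH[OF w]
  define n where "n = count_list (x # w) m"
  have n: "n = count_list w m + (if x = m then 1 else 0)" by (simp add: n_def)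
  have T: "finite (FF m True (x # w) k) \<and> card (FF m True (x # w) k) = (k + n) choose k" for k
  proof (induction k)
    case 0
    have "FF m True (x # w) 0 = Cons x ` FF m (x = m) w 0" by (subst FF_Cons[OF x]) simp
    then show ?case using IH[of "x = m" 0] by (simp add: card_image)
  next
    case (Suc j)
    have eq: "FF m True (x # w) (Suc j) = Cons (Suc m) ` FF m True (x # w) j \<union> Cons x ` FF m (x = m) w (Suc j)"
      by (subst FF_Cons[OF x]) simp
    have d: "Cons (Suc m) ` FF m True (x # w) j \<inter> Cons x ` FF m (x = m) w (Suc j) = {}" using x by auto
    have c2: "card (Cons x ` FF m (x = m) w (Suc j)) = (j + n) choose (Suc j)"
      using IH[of "x = m" "Suc j"] by (simp add: card_image n)
    have f2: "finite (Cons x ` FF m (x = m) w (Suc j))" using IH[of "x = m" "Suc j"] by simp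
    have c1: "card (Cons (Suc m) ` FF m True (x # w) j) = (j + n) choose j"
      using Suc.IH by (simp add: card_image)
    have f1: "finite (Cons (Suc m) ` FF m True (x # w) j)" using Suc.IH by simp
    show ?case unfolding eq using card_Un_disjoint[OF f1 f2 d] c1 c2 f1 f2 by simp
  qed
  show ?case
  proof (cases a)
    case True
    then show ?thesis using T[of k] by (simp add: n_def)
  next
    case False
    have "FF m a (x # w) k = Cons x ` FF m (x = m) w k" using False by (subst FF_Cons[OF x]) simp
    then show ?thesis using IH[of "x = m" k] False by (simp add: card_image n)
  qed
qed


lemma vn_iff: "vn_arrangement M vs \<longleftrightarrow> mset vs = M \<and> successively RR vs"
  unfolding vn_arrangement_def successively_conv_nth RR_def by auto

lemma count_level: "count (level_mset t b) x = (if x \<le> t then b x else 0)"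
  by (simp add: level_mset_def count_sum)

lemma level_Suc: "level_mset (Suc t) b = level_mset t b + replicate_mset (b (Suc t)) (Suc t)"
  by (simp add: level_mset_def)

definition VV :: "nat \<Rightarrow> (nat \<Rightarrow> nat) \<Rightarrow> nat list set" where
  "VV t b = {vs. mset vs = level_mset t b \<and> successively RR vs}"

lemma set_le: "mset vs = level_mset t b \<Longrightarrow> x \<in> set vs \<Longrightarrow> x \<le> t"
proof -
  assume a: "mset vs = level_mset t b" "x \<in> set vs"
  have "count (mset vs) x > 0" using a(2) by simp
  then show ?thesis using a(1) by (simp add: count_level split: if_splits)
qed

lemma VV_Suc: "VV (Suc t) b = (\<Union>w\<in>VV t b. FF t True w (b (Suc t)))"
proof (rule set_eqI, rule iffI)
  fix vs assume "vs \<in> VV (Suc t) b"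
  then have m: "mset vs = level_mset (Suc t) b" and s: "successively RR vs" by (auto simp: VV_def)
  have st: "set vs \<subseteq> {..Suc t}" using set_le[OF m] by auto
  have sf: "goodc t True vs \<and> successively RR (filter (\<lambda>z. z \<noteq> Suc t) vs)"
    using succ_filter[OF st] s by simp
  have mf: "mset (filter (\<lambda>z. z \<noteq> Suc t) vs) = level_mset t b"
  proof (rule multiset_eqI)
    fix x
    have "count (mset vs) x = count (level_mset (Suc t) b) x" using m by simp
    then show "count (mset (filter (\<lambda>z. z \<noteq> Suc t) vs)) x = count (level_mset t b) x"
      by (auto simp: count_level)
  qed
  have cc: "count_list vs (Suc t) = b (Suc t)"
  proof -
    have "count (mset vs) (Suc t) = count (level_mset (Suc t) b) (Suc t)" using m by simp
    then show ?thesis by (simp add: count_level count_mset)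
  qed
  have "filter (\<lambda>z. z \<noteq> Suc t) vs \<in> VV t b" using mf sf by (simp add: VV_def)
  moreover have "vs \<in> FF t True (filter (\<lambda>z. z \<noteq> Suc t) vs) (b (Suc t))" using sf cc by (simp add: FF_def)
  ultimately show "vs \<in> (\<Union>w\<in>VV t b. FF t True w (b (Suc t)))" by blast
next
  fix vs assume "vs \<in> (\<Union>w\<in>VV t b. FF t True w (b (Suc t)))"
  then obtain w where w0: "w \<in> VV t b" and f0: "vs \<in> FF t True w (b (Suc t))" by blast
  have w: "mset w = level_mset t b" "successively RR w" using w0 by (auto simp: VV_def)
  have f: "filter (\<lambda>z. z \<noteq> Suc t) vs = w" "count_list vs (Suc t) = b (Suc t)" "goodc t True vs"
    using f0 by (auto simp: FF_def)
  have mv: "mset vs = level_mset (Suc t) b"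
  proof (rule multiset_eqI)
    fix x
    show "count (mset vs) x = count (level_mset (Suc t) b) x"
    proof (cases "x = Suc t")
      case True then show ?thesis using f(2) by (simp add: count_level count_mset)
    next
      case False
      have "count (mset (filter (\<lambda>z. z \<noteq> Suc t) vs)) x = count (level_mset t b) x" using f(1) w(1) by simp
      then show ?thesis using False by (simp add: count_level)
    qed
  qed
  have st: "set vs \<subseteq> {..Suc t}" using set_le[OF mv] by auto
  have "successively RR vs" using succ_filter[OF st] f w by simp
  then show "vs \<in> VV (Suc t) b" using mv by (simp add: VV_def)
qed

lemma VV_0: "VV 0 b = {replicate (b 0) 0}"
proof -
  have "mset vs = replicate_mset (b 0) 0 \<longleftrightarrow> vs = replicate (b 0) 0" for vs
  proof
    assume a: "mset vs = replicate_mset (b 0) 0"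
    have "length vs = b 0" using arg_cong[OF a, of size] by simp
    moreover have "\<forall>x\<in>set vs. x = 0" using a
      by (metis in_replicate_mset set_mset_mset)
    ultimately show "vs = replicate (b 0) 0" by (simp add: replicate_eqI)
  qed simp
  moreover have "successively RR (replicate n 0)" for n
    by (simp add: successively_conv_nth RR_def)
  ultimately show ?thesis by (auto simp: VV_def level_mset_def)
qed

lemma VV_card: "finite (VV t b) \<and> card (VV t b) = (\<Prod>i<t. (b i + b (Suc i)) choose (b i))"
proof (induction t)
  case 0
  then show ?case by (simp add: VV_0)
next
  case (Suc t)
  have fin: "\<forall>w\<in>VV t b. finite (FF t True w (b (Suc t)))"
    and cw: "\<forall>w\<in>VV t b. card (FF t True w (b (Suc t))) = (b t + b (Suc t)) choose (b t)"
  proof (safe)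
    fix w assume "w \<in> VV t b"
    then have m: "mset w = level_mset t b" by (simp add: VV_def)
    have ns: "Suc t \<notin> set w" using set_le[OF m, of "Suc t"] by auto
    have cl: "count_list w t = b t"
      using arg_cong[OF m, of "\<lambda>M. count M t"] by (simp add: count_level count_mset)
    show "finite (FF t True w (b (Suc t)))" using FF_card[OF ns] by blast
    have "card (FF t True w (b (Suc t))) = (b (Suc t) + b t) choose b (Suc t)"
      using FF_card[OF ns, of True "b (Suc t)"] cl by simp
    also have "\<dots> = (b t + b (Suc t)) choose (b t)"
      using binomial_symmetric[of "b (Suc t)" "b (Suc t) + b t"] by (simp add: add.commute)
    finally show "card (FF t True w (b (Suc t))) = (b t + b (Suc t)) choose (b t)" .
  qed
  have disj: "\<forall>w1\<in>VV t b. \<forall>w2\<in>VV t b. w1 \<noteq> w2 \<longrightarrow> FF t True w1 (b (Suc t)) \<inter> FF t True w2 (b (Suc t)) = {}"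
    by (auto simp: FF_def)
  have "card (VV (Suc t) b) = (\<Sum>w\<in>VV t b. card (FF t True w (b (Suc t))))"
    unfolding VV_Suc using card_UN_disjoint[OF conjunct1[OF Suc.IH] fin disj] .
  also have "\<dots> = card (VV t b) * ((b t + b (Suc t)) choose (b t))" using cw by simp
  finally have c: "card (VV (Suc t) b) = card (VV t b) * ((b t + b (Suc t)) choose (b t))" .
  have f: "finite (VV (Suc t) b)" unfolding VV_Suc using Suc.IH fin by blast
  show ?case using f c Suc.IH by simp
qed

theorem proposition4p1:
  fixes t :: nat and b :: "nat \<Rightarrow> nat"
  shows "card {vs. vn_arrangement (level_mset t b) vs}
           = (\<Prod>i<t. (b i + b (Suc i)) choose (b i))"
proof -
  have "{vs. vn_arrangement (level_mset t b) vs} = VV t b" by (simp add: VV_def vn_iff)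
  then show ?thesis using VV_card by simp
qed

end
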